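(* Let $S$ be a semibounded linear relation in $\mathfrak H$ with lower bound $\gamma\in\mathbb R$, let $c\le\gamma$, and let $Q_c$ be a representing map for $\mathfrak t(S)-c$. Then: (1) $\varphi\in\mathrm{dom}\,\bar{\mathfrak t}(S)$ if and only if there is a sequence $\{\varphi_n,\varphi_n'\}\in S$ with $\varphi_n\to\varphi$ and $(\varphi_n'-\varphi_m',\varphi_n-\varphi_m)\to0$ as $n,m\to\infty$. (2) $\varphi\in\ker(\bar{\mathfrak t}(S)-c)$, i.e. $\varphi\in\mathrm{dom}\,\bar{\mathfrak t}(S)$ with $\bar{\mathfrak t}(S)[\varphi,\varphi]=c\|\varphi\|^2$, if and only if there is a sequence $\{\varphi_n,\varphi_n'\}\in S$ with $\varphi_n\to\varphi$ and $(\varphi_n'-c\varphi_n,\varphi_n)\to0$. (3) $\varphi\in\mathrm{ran}\,Q_c^*$ if and only if there exists $C_\varphi<\infty$ such that $|(\psi,\varphi)|^2\le C_\varphi(\psi',\psi)$ for all $\{\psi,\psi'\}\in S-c$.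
   Context: Linear relations are linear subspaces $T\subset\mathfrak H\times\mathfrak K$; $\mathrm{dom}$, $\mathrm{ran}$ as usual, $T^*=\{\{h,k\}\in\mathfrak K\times\mathfrak H:(k,f)=(h,g)\ \forall\{f,g\}\in T\}$, and $S-c=\{\{f,g-cf\}:\{f,g\}\in S\}$. A relation $S$ in $\mathfrak H$ is semibounded with lower bound $\gamma$ if $\gamma$ is the supremum of all $c$ with $(\varphi',\varphi)\ge c\|\varphi\|^2$ for all $\{\varphi,\varphi'\}\in S$. The form $\mathfrak t(S)[\varphi,\psi]=(\varphi',\psi)$, $\{\varphi,\varphi'\},\{\psi,\psi'\}\in S$, domain $\mathrm{dom}\,S$; it is closable and $\bar{\mathfrak t}(S)$ denotes its closure. A representing map for $\mathfrak t(S)-c$ is a linear operator $Q_c$ from $\mathfrak H$ to a Hilbert space $\mathfrak K_c$ with $\mathrm{dom}\,Q_c=\mathrm{dom}\,S$ and $\mathfrak t(S)[\varphi,\psi]=c(\varphi,\psi)+(Q_c\varphi,Q_c\psi)$; $Q_c^*\subset\mathfrak K_c\times\mathfrak H$ is its adjoint relation. *)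

theory Defs
  imports "HOL-Analysis.Analysis"
begin

text \<open>Inner product linear in the first argument, conjugate linear in the second.
  A complex Hilbert space is a type of class complex_inner and complete_space.\<close>

class complex_inner = real_normed_vector +
  fixes scaleC :: "complex \<Rightarrow> 'a \<Rightarrow> 'a" (infixr \<open>*\<^sub>C\<close> 75)
  fixes cinner :: "'a \<Rightarrow> 'a \<Rightarrow> complex"
  assumes scaleC_add_right: "a *\<^sub>C (x + y) = a *\<^sub>C x + a *\<^sub>C y"
    and scaleC_add_left: "(a + b) *\<^sub>C x = a *\<^sub>C x + b *\<^sub>C x"
    and scaleC_scaleC: "a *\<^sub>C (b *\<^sub>C x) = (a * b) *\<^sub>C x"
    and scaleC_one: "1 *\<^sub>C x = x"
    and scaleR_scaleC: "r *\<^sub>R x = complex_of_real r *\<^sub>C x"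
    and cinner_commute: "cinner x y = cnj (cinner y x)"
    and cinner_add_left: "cinner (x + y) z = cinner x z + cinner y z"
    and cinner_scaleC_left: "cinner (a *\<^sub>C x) y = a * cinner x y"
    and cinner_self_nonneg: "0 \<le> Re (cinner x x)"
    and cinner_self_eq_zero: "cinner x x = 0 \<longleftrightarrow> x = 0"
    and norm_eq_sqrt_cinner: "norm x = sqrt (Re (cinner x x))"

instantiation complex :: complex_inner
begin
definition scaleC_complex :: "complex \<Rightarrow> complex \<Rightarrow> complex" where "scaleC_complex a x = a * x"
definition cinner_complex :: "complex \<Rightarrow> complex \<Rightarrow> complex" where "cinner_complex x y = x * cnj y"
instance
proof
  fix a b :: complex and x y z :: complex and r :: real
  show "a *\<^sub>C (x + y) = a *\<^sub>C x + a *\<^sub>C y" by (simp add: scaleC_complex_def distrib_left)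
  show "(a + b) *\<^sub>C x = a *\<^sub>C x + b *\<^sub>C x" by (simp add: scaleC_complex_def distrib_right)
  show "a *\<^sub>C (b *\<^sub>C x) = (a * b) *\<^sub>C x" by (simp add: scaleC_complex_def)
  show "1 *\<^sub>C x = x" by (simp add: scaleC_complex_def)
  show "r *\<^sub>R x = complex_of_real r *\<^sub>C x" by (simp add: scaleC_complex_def scaleR_conv_of_real)
  show "cinner x y = cnj (cinner y x)" by (simp add: cinner_complex_def)
  show "cinner (x + y) z = cinner x z + cinner y z" by (simp add: cinner_complex_def distrib_right)
  show "cinner (a *\<^sub>C x) y = a * cinner x y" by (simp add: cinner_complex_def scaleC_complex_def)
  show "0 \<le> Re (cinner x x)" by (simp add: cinner_complex_def complex_mult_cnj cmod_def)
  show "cinner x x = 0 \<longleftrightarrow> x = 0" by (simp add: cinner_complex_def)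
  show "norm x = sqrt (Re (cinner x x))" by (simp add: cinner_complex_def complex_mult_cnj cmod_def)
qed
end

definition linear_rel :: "('a::complex_inner \<times> 'b::complex_inner) set \<Rightarrow> bool" where
  "linear_rel T \<longleftrightarrow> (0, 0) \<in> T \<and>
     (\<forall>f g f' g'. (f, g) \<in> T \<longrightarrow> (f', g') \<in> T \<longrightarrow> (f + f', g + g') \<in> T) \<and>
     (\<forall>a f g. (f, g) \<in> T \<longrightarrow> (a *\<^sub>C f, a *\<^sub>C g) \<in> T)"

definition adjoint_rel :: "('a::complex_inner \<times> 'b::complex_inner) set \<Rightarrow> ('b \<times> 'a) set" where
  "adjoint_rel T = {(h, k). \<forall>f g. (f, g) \<in> T \<longrightarrow> cinner k f = cinner h g}"

definition shift_rel :: "('a::complex_inner \<times> 'a) set \<Rightarrow> real \<Rightarrow> ('a \<times> 'a) set" where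
  "shift_rel S c = {(f, g - c *\<^sub>R f) | f g. (f, g) \<in> S}"

definition is_lower_bound :: "('a::complex_inner \<times> 'a) set \<Rightarrow> real \<Rightarrow> bool" where
  "is_lower_bound S c \<longleftrightarrow>
     (\<forall>\<phi> \<phi>'. (\<phi>, \<phi>') \<in> S \<longrightarrow> Im (cinner \<phi>' \<phi>) = 0 \<and> c * (norm \<phi>)\<^sup>2 \<le> Re (cinner \<phi>' \<phi>))"

definition semibounded_with_lb :: "('a::complex_inner \<times> 'a) set \<Rightarrow> real \<Rightarrow> bool" where
  "semibounded_with_lb S \<gamma> \<longleftrightarrow>
     {c. is_lower_bound S c} \<noteq> {} \<and> bdd_above {c. is_lower_bound S c} \<and>
     \<gamma> = Sup {c. is_lower_bound S c}"

text \<open>A form is a pair (domain, values); values outside the domain are normalised to 0.\<close>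
type_synonym 'a form = "'a set \<times> ('a \<Rightarrow> 'a \<Rightarrow> complex)"

definition is_form :: "'a::complex_inner form \<Rightarrow> bool" where
  "is_form t \<longleftrightarrow> 0 \<in> fst t \<and>
     (\<forall>x y. x \<in> fst t \<longrightarrow> y \<in> fst t \<longrightarrow> x + y \<in> fst t) \<and>
     (\<forall>a x. x \<in> fst t \<longrightarrow> a *\<^sub>C x \<in> fst t) \<and>
     (\<forall>x y z. x \<in> fst t \<longrightarrow> y \<in> fst t \<longrightarrow> z \<in> fst t \<longrightarrow>
        snd t (x + y) z = snd t x z + snd t y z \<and> snd t z (x + y) = snd t z x + snd t z y) \<and>
     (\<forall>a x y. x \<in> fst t \<longrightarrow> y \<in> fst t \<longrightarrow>
        snd t (a *\<^sub>C x) y = a * snd t x y \<and> snd t x (a *\<^sub>C y) = cnj a * snd t x y) \<and>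
     (\<forall>x y. x \<notin> fst t \<or> y \<notin> fst t \<longrightarrow> snd t x y = 0)"

definition form_extends :: "'a::complex_inner form \<Rightarrow> 'a form \<Rightarrow> bool" where
  "form_extends t1 t2 \<longleftrightarrow> fst t1 \<subseteq> fst t2 \<and>
     (\<forall>x y. x \<in> fst t1 \<longrightarrow> y \<in> fst t1 \<longrightarrow> snd t2 x y = snd t1 x y)"

definition closed_form :: "'a::complex_inner form \<Rightarrow> bool" where
  "closed_form t \<longleftrightarrow> is_form t \<and>
     (\<forall>x y. snd t x y = cnj (snd t y x)) \<and>
     (\<exists>c. \<forall>x \<in> fst t. c * (norm x)\<^sup>2 \<le> Re (snd t x x)) \<and>
     (\<forall>u x. (\<forall>n. u n \<in> fst t) \<longrightarrow> u \<longlonglongrightarrow> x \<longrightarrow>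
        ((\<lambda>(n, m). snd t (u n - u m) (u n - u m)) \<longlongrightarrow> 0) (sequentially \<times>\<^sub>F sequentially) \<longrightarrow>
        x \<in> fst t \<and> (\<lambda>n. snd t (u n - x) (u n - x)) \<longlonglongrightarrow> 0)"

definition form_closure :: "'a::complex_inner form \<Rightarrow> 'a form" where
  "form_closure t = (THE t'. closed_form t' \<and> form_extends t t' \<and>
      (\<forall>t''. closed_form t'' \<and> form_extends t t'' \<longrightarrow> form_extends t' t''))"

definition form_of_rel :: "('a::complex_inner \<times> 'a) set \<Rightarrow> 'a form" where
  "form_of_rel S = (Domain S, (\<lambda>\<phi> \<psi>. if \<phi> \<in> Domain S \<and> \<psi> \<in> Domain S
       then cinner (SOME \<phi>'. (\<phi>, \<phi>') \<in> S) \<psi> else 0))"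

definition representing_map ::
    "('a::complex_inner \<times> 'a) set \<Rightarrow> real \<Rightarrow> ('a \<Rightarrow> 'b::complex_inner) \<Rightarrow> bool" where
  "representing_map S c Q \<longleftrightarrow>
     (\<forall>x y. x \<in> Domain S \<longrightarrow> y \<in> Domain S \<longrightarrow> Q (x + y) = Q x + Q y) \<and>
     (\<forall>a x. x \<in> Domain S \<longrightarrow> Q (a *\<^sub>C x) = a *\<^sub>C Q x) \<and>
     (\<forall>\<phi> \<psi>. \<phi> \<in> Domain S \<longrightarrow> \<psi> \<in> Domain S \<longrightarrow>
        snd (form_of_rel S) \<phi> \<psi> = complex_of_real c * cinner \<phi> \<psi> + cinner (Q \<phi>) (Q \<psi>))"

definition op_graph :: "('a \<Rightarrow> 'b) \<Rightarrow> 'a set \<Rightarrow> ('a \<times> 'b) set" where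
  "op_graph Q D = {(x, Q x) | x. x \<in> D}"

end

theory Submission
  imports Defs
begin

lemma cinner_zero_left[simp]: "cinner 0 (y::'a::complex_inner) = 0"
proof -
  have "cinner (0 + 0) y = cinner 0 y + cinner 0 y" by (rule cinner_add_left)
  then show ?thesis by simp
qed

lemma cinner_zero_right[simp]: "cinner x 0 = 0"
proof -
  have "cinner x 0 = cnj (cinner 0 x)" by (rule cinner_commute)
  then show ?thesis by simp
qed

lemma cinner_add_right: "cinner x (y + z) = cinner x y + cinner x z"
proof -
  have "cinner x (y+z) = cnj (cinner (y+z) x)" by (rule cinner_commute)
  also have "\<dots> = cnj (cinner y x) + cnj (cinner z x)" by (simp add: cinner_add_left)
  also have "\<dots> = cinner x y + cinner x z" by (simp add: cinner_commute[of x y] cinner_commute[of x z])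
  finally show ?thesis .
qed

lemma cinner_scaleC_right: "cinner x (a *\<^sub>C y) = cnj a * cinner x y"
proof -
  have "cinner x (a *\<^sub>C y) = cnj (cinner (a *\<^sub>C y) x)" by (rule cinner_commute)
  also have "\<dots> = cnj a * cnj (cinner y x)" by (simp add: cinner_scaleC_left)
  also have "\<dots> = cnj a * cinner x y" by (simp add: cinner_commute[of x y])
  finally show ?thesis .
qed

lemma cinner_scaleR_left: "cinner (r *\<^sub>R x) y = of_real r * cinner x y"
  by (simp only: scaleR_scaleC cinner_scaleC_left)

lemma cinner_scaleR_right: "cinner x (r *\<^sub>R y) = of_real r * cinner x y"
  by (simp only: scaleR_scaleC cinner_scaleC_right complex_cnj_complex_of_real)

lemma cinner_minus_left: "cinner (- x) y = - cinner x y"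
  using cinner_scaleR_left[of "-1" x y] by simp

lemma cinner_minus_right: "cinner x (- y) = - cinner x y"
  using cinner_scaleR_right[of x "-1" y] by simp

lemma cinner_diff_left: "cinner (x - y) z = cinner x z - cinner y z"
  using cinner_add_left[of x "-y" z] by (simp add: cinner_minus_left)

lemma cinner_diff_right: "cinner x (y - z) = cinner x y - cinner x z"
  using cinner_add_right[of x y "-z"] by (simp add: cinner_minus_right)

lemma cinner_self_Im: "Im (cinner x x) = 0"
proof -
  have "Im (cinner x x) = Im (cnj (cinner x x))" using cinner_commute[of x x] by simp
  then show ?thesis by simp
qed

lemma cinner_self_Re: "Re (cinner x x) = (norm x)\<^sup>2"
  by (simp add: norm_eq_sqrt_cinner cinner_self_nonneg)

lemma cinner_self: "cinner x x = of_real ((norm x)\<^sup>2)"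
  by (rule complex_eqI) (simp_all only: cinner_self_Im cinner_self_Re Re_complex_of_real Im_complex_of_real)

lemma scaleC_zero_left[simp]: "0 *\<^sub>C x = 0"
  using scaleR_scaleC[of 0 x, symmetric] by simp

lemma scaleC_minus1: "(-1) *\<^sub>C x = - x"
  using scaleR_scaleC[of "-1" x, symmetric] by simp

lemma real_quad_cs:
  fixes a b d :: real
  assumes "\<And>t. 0 \<le> a * t\<^sup>2 + 2 * b * t + d" "0 \<le> a" "0 \<le> d"
  shows "b\<^sup>2 \<le> a * d"
proof (cases "a = 0")
  case True
  show ?thesis
  proof (rule ccontr)
    assume "\<not> ?thesis"
    then have "b \<noteq> 0" using True by simp
    have "0 \<le> 2 * b * (- (d + 1) / (2 * b)) + d" using assms(1)[of "- (d + 1) / (2 * b)"] True by simp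
    also have "\<dots> = -1" using \<open>b \<noteq> 0\<close> by (simp add: field_simps)
    finally show False by simp
  qed
next
  case False
  then have "a > 0" using assms(2) by simp
  have "0 \<le> a * (-b/a)\<^sup>2 + 2 * b * (-b/a) + d" by (rule assms(1))
  also have "\<dots> = (a*d - b\<^sup>2)/a" using \<open>a > 0\<close> by (simp add: field_simps power2_eq_square)
  finally have "0 \<le> (a*d - b\<^sup>2)/a" .
  then have "0 \<le> a*d - b\<^sup>2" using \<open>a > 0\<close> by (simp add: zero_le_divide_iff)
  then show ?thesis by simp
qed

lemma cinner_cs: "cmod (cinner x y) \<le> norm x * norm y"
proof -
  define z where "z = cinner x y"
  define u where "u = (if z = 0 then 1 else cnj z / of_real (cmod z))"
  have cu: "cmod u = 1" by (simp add: u_def norm_divide)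
  have uz: "u * z = of_real (cmod z)"
  proof (cases "z = 0")
    case False
    have "u * z = (z * cnj z) / of_real (cmod z)" using False by (simp add: u_def field_simps)
    also have "\<dots> = of_real (cmod z)" using False
      by (simp add: complex_norm_square[symmetric] power2_eq_square)
    finally show ?thesis .
  qed (simp add: u_def)
  have uu: "u * cnj u = 1" using cu complex_norm_square[of u] by simp
  have xy: "cinner (u *\<^sub>C x) y = of_real (cmod z)" using uz by (simp add: cinner_scaleC_left z_def)
  have q: "0 \<le> (norm y)\<^sup>2 * t\<^sup>2 + 2 * cmod z * t + (norm x)\<^sup>2" for t :: real
  proof -
    have "0 \<le> Re (cinner (u *\<^sub>C x + t *\<^sub>R y) (u *\<^sub>C x + t *\<^sub>R y))" by (rule cinner_self_nonneg)
    also have "cinner (u *\<^sub>C x + t *\<^sub>R y) (u *\<^sub>C x + t *\<^sub>R y) =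
        cinner (u *\<^sub>C x) (u *\<^sub>C x) + of_real t * cinner (u *\<^sub>C x) y + of_real t * cinner y (u *\<^sub>C x) + of_real t * of_real t * cinner y y"
        by (simp add: cinner_add_left cinner_add_right cinner_scaleR_left cinner_scaleR_right algebra_simps)
    also have "cinner y (u *\<^sub>C x) = cnj (cinner (u *\<^sub>C x) y)" by (rule cinner_commute)
    also have "cinner (u *\<^sub>C x) (u *\<^sub>C x) = cinner x x"
      by (simp add: cinner_scaleC_left cinner_scaleC_right mult.assoc[symmetric] uu mult.commute[of "cnj u" u])
    finally show ?thesis using xy by (simp add: cinner_self_Re power2_eq_square algebra_simps)
  qed
  have "(cmod z)\<^sup>2 \<le> (norm y)\<^sup>2 * (norm x)\<^sup>2" by (rule real_quad_cs[OF q]) auto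
  then have "(cmod z)\<^sup>2 \<le> (norm x * norm y)\<^sup>2" by (simp add: power_mult_distrib mult.commute)
  then show ?thesis unfolding z_def by (rule power2_le_imp_le) simp
qed



lemma scaleC_zero_right[simp]: "a *\<^sub>C (0::'a::complex_inner) = 0"
proof -
  have "a *\<^sub>C (0 + 0::'a) = a *\<^sub>C 0 + a *\<^sub>C 0" by (rule scaleC_add_right)
  then show ?thesis by simp
qed

lemma scaleC_minus_right: "a *\<^sub>C (- x) = - (a *\<^sub>C (x::'a::complex_inner))"
proof -
  have "a *\<^sub>C (x + - x) = a *\<^sub>C x + a *\<^sub>C (- x)" by (rule scaleC_add_right)
  then show ?thesis by (simp add: eq_neg_iff_add_eq_0 add.commute)
qed

lemma scaleC_diff_right: "a *\<^sub>C (x - y) = a *\<^sub>C x - a *\<^sub>C (y::'a::complex_inner)"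
  using scaleC_add_right[of a x "-y"] by (simp add: scaleC_minus_right)

lemma scaleR_scaleC_comm: "a *\<^sub>C (r *\<^sub>R x) = r *\<^sub>R (a *\<^sub>C (x::'a::complex_inner))"
  by (simp add: scaleR_scaleC scaleC_scaleC mult.commute)

lemma norm_scaleC: "norm (a *\<^sub>C x) = cmod a * norm (x::'a::complex_inner)"
proof -
  have "(norm (a *\<^sub>C x))\<^sup>2 = Re (cinner (a *\<^sub>C x) (a *\<^sub>C x))" by (simp add: cinner_self_Re)
  also have "cinner (a *\<^sub>C x) (a *\<^sub>C x) = (a * cnj a) * cinner x x"
    by (simp add: cinner_scaleC_left cinner_scaleC_right mult.assoc)
  also have "\<dots> = of_real ((cmod a * norm x)\<^sup>2)"
    by (simp add: complex_norm_square[symmetric] cinner_self power_mult_distrib)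
  finally have "(norm (a *\<^sub>C x))\<^sup>2 = (cmod a * norm x)\<^sup>2" by simp
  then show ?thesis by (simp add: power2_eq_iff_nonneg)
qed

lemma bounded_linear_scaleC: "bounded_linear (\<lambda>x::'a::complex_inner. a *\<^sub>C x)"
proof
  show "a *\<^sub>C (x + y) = a *\<^sub>C x + a *\<^sub>C y" for x y :: 'a by (rule scaleC_add_right)
  show "a *\<^sub>C (r *\<^sub>R x) = r *\<^sub>R (a *\<^sub>C x)" for r and x :: 'a by (rule scaleR_scaleC_comm)
  show "\<exists>K. \<forall>x::'a. norm (a *\<^sub>C x) \<le> norm x * K"
    by (rule exI[of _ "cmod a"]) (simp add: norm_scaleC mult.commute)
qed

lemma tendsto_scaleC: "(f \<longlongrightarrow> x) F \<Longrightarrow> ((\<lambda>n. a *\<^sub>C f n) \<longlongrightarrow> a *\<^sub>C (x::'a::complex_inner)) F"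
  by (rule bounded_linear.tendsto[OF bounded_linear_scaleC])

lemma bounded_bilinear_cinner: "bounded_bilinear (cinner :: 'a::complex_inner \<Rightarrow> 'a \<Rightarrow> complex)"
proof
  show "cinner (a + a') b = cinner a b + cinner a' b" for a a' b :: 'a by (rule cinner_add_left)
  show "cinner a (b + b') = cinner a b + cinner a b'" for a b b' :: 'a by (rule cinner_add_right)
  show "cinner (r *\<^sub>R a) b = r *\<^sub>R cinner a b" for r and a b :: 'a
    by (simp add: cinner_scaleR_left scaleR_conv_of_real)
  show "cinner a (r *\<^sub>R b) = r *\<^sub>R cinner a b" for r and a b :: 'a
    by (simp add: cinner_scaleR_right scaleR_conv_of_real)
  show "\<exists>K. \<forall>a b::'a. norm (cinner a b) \<le> norm a * norm b * K"
    by (rule exI[of _ 1]) (simp add: cinner_cs)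
qed

lemma tendsto_cinner: "(f \<longlongrightarrow> x) F \<Longrightarrow> (g \<longlongrightarrow> y) F \<Longrightarrow>
  ((\<lambda>n. cinner (f n) (g n)) \<longlongrightarrow> cinner x (y::'a::complex_inner)) F"
  by (rule bounded_bilinear.tendsto[OF bounded_bilinear_cinner])

lemma parallelogram: "(norm (a + b))\<^sup>2 + (norm (a - b))\<^sup>2 = 2 * (norm a)\<^sup>2 + 2 * (norm (b::'a::complex_inner))\<^sup>2"
proof -
  have "cinner (a + b) (a + b) + cinner (a - b) (a - b) = 2 * cinner a a + 2 * cinner b b"
    by (simp add: cinner_add_left cinner_add_right cinner_diff_left cinner_diff_right)
  then have "Re (cinner (a + b) (a + b) + cinner (a - b) (a - b)) = Re (2 * cinner a a + 2 * cinner b b)" by simp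
  then show ?thesis by (simp add: cinner_self_Re)
qed

lemma norm_add_sq: "(norm (a + r *\<^sub>R b))\<^sup>2 = (norm a)\<^sup>2 + 2 * r * Re (cinner b a) + r\<^sup>2 * (norm (b::'a::complex_inner))\<^sup>2"
proof -
  have "cinner (a + r *\<^sub>R b) (a + r *\<^sub>R b) = cinner a a + of_real r * cinner a b + of_real r * cinner b a + of_real r * of_real r * cinner b b"
    by (simp add: cinner_add_left cinner_add_right cinner_scaleR_left cinner_scaleR_right algebra_simps)
  also have "cinner a b = cnj (cinner b a)" by (rule cinner_commute)
  finally have "Re (cinner (a + r *\<^sub>R b) (a + r *\<^sub>R b)) = Re (cinner a a) + 2 * r * Re (cinner b a) + r\<^sup>2 * Re (cinner b b)"
    by (simp add: power2_eq_square)
  then show ?thesis by (simp add: cinner_self_Re)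
qed

lemma Cauchy_prod_iff:
  fixes v :: "nat \<Rightarrow> 'a::real_normed_vector"
  shows "Cauchy v \<longleftrightarrow> ((\<lambda>(n, m). (norm (v n - v m))\<^sup>2) \<longlongrightarrow> 0) (sequentially \<times>\<^sub>F sequentially)"
proof
  assume C: "Cauchy v"
  show "((\<lambda>(n, m). (norm (v n - v m))\<^sup>2) \<longlongrightarrow> 0) (sequentially \<times>\<^sub>F sequentially)"
  proof (rule tendstoI)
    fix e :: real assume "e > 0"
    then have "sqrt e > 0" by simp
    with C obtain N where N: "\<And>m n. m \<ge> N \<Longrightarrow> n \<ge> N \<Longrightarrow> dist (v m) (v n) < sqrt e"
      unfolding Cauchy_def by blast
    show "eventually (\<lambda>x. dist ((\<lambda>(n, m). (norm (v n - v m))\<^sup>2) x) 0 < e) (sequentially \<times>\<^sub>F sequentially)"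
      unfolding eventually_prod_sequentially
    proof (intro exI allI impI)
      fix m n assume "m \<ge> N" "n \<ge> N"
      then have "norm (v n - v m) < sqrt e" using N[of n m] by (simp add: dist_norm)
      then have "(norm (v n - v m))\<^sup>2 < (sqrt e)\<^sup>2"
        by (intro power_strict_mono) auto
      then show "dist ((\<lambda>(n, m). (norm (v n - v m))\<^sup>2) (n, m)) 0 < e" using \<open>e > 0\<close> by simp
    qed
  qed
next
  assume T: "((\<lambda>(n, m). (norm (v n - v m))\<^sup>2) \<longlongrightarrow> 0) (sequentially \<times>\<^sub>F sequentially)"
  show "Cauchy v" unfolding Cauchy_def
  proof (intro allI impI)
    fix e :: real assume "e > 0"
    then have "e\<^sup>2 > 0" by simp
    from tendstoD[OF T this] obtain N where
      N: "\<And>m n. m \<ge> N \<Longrightarrow> n \<ge> N \<Longrightarrow> (norm (v n - v m))\<^sup>2 < e\<^sup>2"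
      unfolding eventually_prod_sequentially by auto
    show "\<exists>M. \<forall>m\<ge>M. \<forall>n\<ge>M. dist (v m) (v n) < e"
    proof (intro exI allI impI)
      fix m n assume "m \<ge> N" "n \<ge> N"
      then have "(norm (v m - v n))\<^sup>2 < e\<^sup>2" using N[of n m] by simp
      then show "dist (v m) (v n) < e" using \<open>e > 0\<close> by (simp add: dist_norm power_less_imp_less_base)
    qed
  qed
qed



lemma form_zero: "is_form t \<Longrightarrow> 0 \<in> fst t"
  unfolding is_form_def by (elim conjE) simp
lemma form_add: "is_form t \<Longrightarrow> x \<in> fst t \<Longrightarrow> y \<in> fst t \<Longrightarrow> x + y \<in> fst t"
  unfolding is_form_def by (elim conjE) simp
lemma form_scale: "is_form t \<Longrightarrow> x \<in> fst t \<Longrightarrow> a *\<^sub>C x \<in> fst t"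
  unfolding is_form_def by (elim conjE) simp
lemma form_diff: "is_form t \<Longrightarrow> x \<in> fst t \<Longrightarrow> y \<in> fst t \<Longrightarrow> x - y \<in> fst t"
  using form_add[of t x "(-1) *\<^sub>C y"] form_scale[of t y "-1"] by (simp add: scaleC_minus1)
lemma form_addL: "is_form t \<Longrightarrow> x \<in> fst t \<Longrightarrow> y \<in> fst t \<Longrightarrow> z \<in> fst t \<Longrightarrow> snd t (x + y) z = snd t x z + snd t y z"
  unfolding is_form_def by (elim conjE) simp
lemma form_addR: "is_form t \<Longrightarrow> x \<in> fst t \<Longrightarrow> y \<in> fst t \<Longrightarrow> z \<in> fst t \<Longrightarrow> snd t z (x + y) = snd t z x + snd t z y"
  unfolding is_form_def by (elim conjE) simp
lemma form_scaleL: "is_form t \<Longrightarrow> x \<in> fst t \<Longrightarrow> y \<in> fst t \<Longrightarrow> snd t (a *\<^sub>C x) y = a * snd t x y"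
  unfolding is_form_def by (elim conjE) simp
lemma form_scaleR: "is_form t \<Longrightarrow> x \<in> fst t \<Longrightarrow> y \<in> fst t \<Longrightarrow> snd t x (a *\<^sub>C y) = cnj a * snd t x y"
  unfolding is_form_def by (elim conjE) simp
lemma form_out: "is_form t \<Longrightarrow> x \<notin> fst t \<or> y \<notin> fst t \<Longrightarrow> snd t x y = 0"
  unfolding is_form_def by (elim conjE) simp

lemma form_expand:
  assumes "is_form t" "x \<in> fst t" "y \<in> fst t"
  shows "snd t (x + a *\<^sub>C y) (x + a *\<^sub>C y) = snd t x x + cnj a * snd t x y + a * snd t y x + a * cnj a * snd t y y"
proof -
  have ay: "a *\<^sub>C y \<in> fst t" using assms form_scale by blast
  have s: "x + a *\<^sub>C y \<in> fst t" using assms ay form_add by blast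
  have "snd t (x + a *\<^sub>C y) (x + a *\<^sub>C y) = snd t x (x + a *\<^sub>C y) + snd t (a *\<^sub>C y) (x + a *\<^sub>C y)"
    using form_addL[OF assms(1) assms(2) ay s] .
  also have "snd t x (x + a *\<^sub>C y) = snd t x x + snd t x (a *\<^sub>C y)"
    using form_addR[OF assms(1) assms(2) ay assms(2)] .
  also have "snd t (a *\<^sub>C y) (x + a *\<^sub>C y) = snd t (a *\<^sub>C y) x + snd t (a *\<^sub>C y) (a *\<^sub>C y)"
    using form_addR[OF assms(1) assms(2) ay ay] .
  also have "snd t x (a *\<^sub>C y) = cnj a * snd t x y" using form_scaleR[OF assms(1) assms(2) assms(3)] .
  also have "snd t (a *\<^sub>C y) x = a * snd t y x" using form_scaleL[OF assms(1) assms(3) assms(2)] .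
  also have "snd t (a *\<^sub>C y) (a *\<^sub>C y) = a * (cnj a * snd t y y)"
    using form_scaleL[OF assms(1) assms(3) ay] form_scaleR[OF assms(1) assms(3) assms(3)] by simp
  finally show ?thesis by (simp add: algebra_simps)
qed

lemma form_polar:
  assumes "is_form t" "x \<in> fst t" "y \<in> fst t"
  shows "4 * snd t x y = snd t (x + 1 *\<^sub>C y) (x + 1 *\<^sub>C y) - snd t (x + (-1) *\<^sub>C y) (x + (-1) *\<^sub>C y)
     + \<i> * snd t (x + \<i> *\<^sub>C y) (x + \<i> *\<^sub>C y) - \<i> * snd t (x + (-\<i>) *\<^sub>C y) (x + (-\<i>) *\<^sub>C y)"
  unfolding form_expand[OF assms]
  by (simp add: algebra_simps)

lemma form_cs:
  assumes f: "is_form t" and h: "\<forall>x y. snd t x y = cnj (snd t y x)"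
    and lb: "\<forall>z \<in> fst t. c2 * (norm z)\<^sup>2 \<le> Re (snd t z z)"
    and x: "x \<in> fst t" and y: "y \<in> fst t"
  shows "(Re (snd t x y) - c2 * Re (cinner x y))\<^sup>2 \<le>
     (Re (snd t y y) - c2 * (norm y)\<^sup>2) * (Re (snd t x x) - c2 * (norm x)\<^sup>2)"
proof (rule real_quad_cs)
  fix r :: real
  have z: "x + of_real r *\<^sub>C y \<in> fst t" using f x y form_add form_scale by blast
  have "0 \<le> Re (snd t (x + of_real r *\<^sub>C y) (x + of_real r *\<^sub>C y)) - c2 * (norm (x + of_real r *\<^sub>C y))\<^sup>2"
    using lb z by auto
  also have "Re (snd t (x + of_real r *\<^sub>C y) (x + of_real r *\<^sub>C y)) = Re (snd t x x) + 2 * r * Re (snd t x y) + r\<^sup>2 * Re (snd t y y)"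
    unfolding form_expand[OF f x y] using h[rule_format, of y x] by (simp add: power2_eq_square)
  also have "(norm (x + of_real r *\<^sub>C y))\<^sup>2 = (norm x)\<^sup>2 + 2 * r * Re (cinner x y) + r\<^sup>2 * (norm y)\<^sup>2"
    using norm_add_sq[of x r y] cinner_commute[of y x] by (simp add: scaleR_scaleC)
  finally show "0 \<le> (Re (snd t y y) - c2 * (norm y)\<^sup>2) * r\<^sup>2 + 2 * (Re (snd t x y) - c2 * Re (cinner x y)) * r +
      (Re (snd t x x) - c2 * (norm x)\<^sup>2)" by (simp add: algebra_simps)
next
  show "0 \<le> Re (snd t y y) - c2 * (norm y)\<^sup>2" using lb y by auto
  show "0 \<le> Re (snd t x x) - c2 * (norm x)\<^sup>2" using lb x by auto
qed



locale thm_setup =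
  fixes S :: "('a::{complex_inner, complete_space} \<times> 'a) set"
    and Q :: "'a \<Rightarrow> 'b::{complex_inner, complete_space}"
    and \<gamma> c :: real
  assumes lin: "linear_rel S"
    and sb: "semibounded_with_lb S \<gamma>"
    and cle: "c \<le> \<gamma>"
    and rep: "representing_map S c Q"
begin

lemma S0: "(0, 0) \<in> S"
  using lin unfolding linear_rel_def by (elim conjE)
lemma S_add: "(f, g) \<in> S \<Longrightarrow> (f', g') \<in> S \<Longrightarrow> (f + f', g + g') \<in> S"
  using lin unfolding linear_rel_def by (elim conjE) blast
lemma S_scale: "(f, g) \<in> S \<Longrightarrow> (a *\<^sub>C f, a *\<^sub>C g) \<in> S"
  using lin unfolding linear_rel_def by (elim conjE) blast
lemma S_diff: "(f, g) \<in> S \<Longrightarrow> (f', g') \<in> S \<Longrightarrow> (f - f', g - g') \<in> S"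
  using S_add[of f g "(-1) *\<^sub>C f'" "(-1) *\<^sub>C g'"] S_scale[of f' g' "-1"] by (simp add: scaleC_minus1)

lemma dom0: "0 \<in> Domain S" using S0 by blast
lemma dom_add: "x \<in> Domain S \<Longrightarrow> y \<in> Domain S \<Longrightarrow> x + y \<in> Domain S"
  using S_add by blast
lemma dom_scale: "x \<in> Domain S \<Longrightarrow> a *\<^sub>C x \<in> Domain S"
  using S_scale by blast
lemma dom_diff: "x \<in> Domain S \<Longrightarrow> y \<in> Domain S \<Longrightarrow> x - y \<in> Domain S"
  using S_diff by blast

lemma lb: "is_lower_bound S c"
proof -
  define L where "L = {c. is_lower_bound S c}"
  have ne: "L \<noteq> {}" and bdd: "bdd_above L" and g: "\<gamma> = Sup L"
    using sb unfolding semibounded_with_lb_def L_def by auto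
  obtain c0 where c0: "is_lower_bound S c0" using ne L_def by auto
  show ?thesis unfolding is_lower_bound_def
  proof (intro allI impI conjI)
    fix \<phi> \<phi>' assume p: "(\<phi>, \<phi>') \<in> S"
    show "Im (cinner \<phi>' \<phi>) = 0" using c0 p unfolding is_lower_bound_def by blast
    show "c * (norm \<phi>)\<^sup>2 \<le> Re (cinner \<phi>' \<phi>)"
    proof (cases "norm \<phi> = 0")
      case True
      then show ?thesis using c0 p unfolding is_lower_bound_def by force
    next
      case False
      then have n: "(norm \<phi>)\<^sup>2 > 0" by simp
      have "\<gamma> \<le> Re (cinner \<phi>' \<phi>) / (norm \<phi>)\<^sup>2" unfolding g
      proof (rule cSup_least[OF ne])
        fix x assume "x \<in> L"
        then have "x * (norm \<phi>)\<^sup>2 \<le> Re (cinner \<phi>' \<phi>)" using p unfolding L_def is_lower_bound_def by blast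
        then show "x \<le> Re (cinner \<phi>' \<phi>) / (norm \<phi>)\<^sup>2" using n by (simp add: pos_le_divide_eq)
      qed
      then have "c \<le> Re (cinner \<phi>' \<phi>) / (norm \<phi>)\<^sup>2" using cle by linarith
      then show ?thesis using n by (simp add: pos_le_divide_eq)
    qed
  qed
qed

lemma lbD: "(\<phi>, \<phi>') \<in> S \<Longrightarrow> Im (cinner \<phi>' \<phi>) = 0"
  using lb unfolding is_lower_bound_def by blast

lemma mul_orth: assumes "(0, chi) \<in> S" "\<psi> \<in> Domain S" shows "cinner chi \<psi> = 0"
proof -
  obtain \<psi>' where p: "(\<psi>, \<psi>') \<in> S" using assms(2) by blast
  have "Im (cinner (\<psi>' + t *\<^sub>C chi) \<psi>) = 0" for t
    using lbD[OF S_add[OF p S_scale[OF assms(1), of t]]] by simp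
  then have i: "Im (cinner \<psi>' \<psi>) + Im (t * cinner chi \<psi>) = 0" for t
    by (simp add: cinner_add_left cinner_scaleC_left)
  have "Im (cinner \<psi>' \<psi>) = 0" using lbD[OF p] .
  then have a: "Im (t * cinner chi \<psi>) = 0" for t using i[of t] by simp
  show ?thesis using a[of 1] a[of "\<i>"] by (intro complex_eqI) simp_all
qed

lemma form_val: assumes "(\<phi>, \<phi>') \<in> S" "\<psi> \<in> Domain S"
  shows "snd (form_of_rel S) \<phi> \<psi> = cinner \<phi>' \<psi>"
proof -
  have d: "\<phi> \<in> Domain S" using assms(1) by blast
  define \<phi>'' where "\<phi>'' = (SOME \<phi>''. (\<phi>, \<phi>'') \<in> S)"
  have p: "(\<phi>, \<phi>'') \<in> S" unfolding \<phi>''_def using assms(1) by (rule someI)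
  have "cinner (\<phi>'' - \<phi>') \<psi> = 0" using mul_orth[OF _ assms(2)] S_diff[OF p assms(1)] by simp
  then have "cinner \<phi>'' \<psi> = cinner \<phi>' \<psi>" by (simp add: cinner_diff_left)
  then show ?thesis unfolding form_of_rel_def using d assms(2) by (simp add: \<phi>''_def)
qed

lemma rep_val: "x \<in> Domain S \<Longrightarrow> y \<in> Domain S \<Longrightarrow>
   snd (form_of_rel S) x y = of_real c * cinner x y + cinner (Q x) (Q y)"
  using rep unfolding representing_map_def by (elim conjE) blast

lemma Q_add: "x \<in> Domain S \<Longrightarrow> y \<in> Domain S \<Longrightarrow> Q (x + y) = Q x + Q y"
  using rep unfolding representing_map_def by (elim conjE) blast
lemma Q_scale: "x \<in> Domain S \<Longrightarrow> Q (a *\<^sub>C x) = a *\<^sub>C Q x"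
  using rep unfolding representing_map_def by (elim conjE) blast
lemma Q_zero: "Q 0 = 0"
  using Q_scale[OF dom0, of 0] by simp
lemma Q_diff: "x \<in> Domain S \<Longrightarrow> y \<in> Domain S \<Longrightarrow> Q (x - y) = Q x - Q y"
  using Q_add[of x "(-1) *\<^sub>C y"] Q_scale[of y "-1"] dom_scale[of y "-1"] by (simp add: scaleC_minus1)

lemma pair_val: "(\<phi>, \<phi>') \<in> S \<Longrightarrow> \<psi> \<in> Domain S \<Longrightarrow>
   cinner \<phi>' \<psi> = of_real c * cinner \<phi> \<psi> + cinner (Q \<phi>) (Q \<psi>)"
  using form_val rep_val by (metis Domain.DomainI)

lemma pair_self: "(\<phi>, \<phi>') \<in> S \<Longrightarrow> cinner \<phi>' \<phi> = of_real (c * (norm \<phi>)\<^sup>2 + (norm (Q \<phi>))\<^sup>2)"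
  using pair_val[of \<phi> \<phi>' \<phi>] by (auto simp: cinner_self)

lemma closable:
  assumes f: "\<forall>n. f n \<in> Domain S" and f0: "f \<longlonglongrightarrow> 0" and h: "(\<lambda>n. Q (f n)) \<longlonglongrightarrow> h"
  shows "h = 0"
proof -
  have orth: "cinner h (Q \<psi>) = 0" if p: "(\<psi>, \<psi>') \<in> S" for \<psi> \<psi>'
  proof -
    have eq: "cinner (Q (f n)) (Q \<psi>) = cnj (cinner \<psi>' (f n) - of_real c * cinner \<psi> (f n))" for n
      using pair_val[OF p, of "f n"] f cinner_commute[of "Q (f n)" "Q \<psi>"] by simp
    have "(\<lambda>n. cnj (cinner \<psi>' (f n) - of_real c * cinner \<psi> (f n))) \<longlonglongrightarrow> cnj (cinner \<psi>' 0 - of_real c * cinner \<psi> 0)"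
      by (intro tendsto_intros tendsto_cinner f0)
    then have t1: "(\<lambda>n. cinner (Q (f n)) (Q \<psi>)) \<longlonglongrightarrow> 0" unfolding eq by simp
    have t2: "(\<lambda>n. cinner (Q (f n)) (Q \<psi>)) \<longlonglongrightarrow> cinner h (Q \<psi>)"
      by (intro tendsto_cinner h tendsto_const)
    show ?thesis using LIMSEQ_unique[OF t2 t1] .
  qed
  have z: "cinner h (Q (f n)) = 0" for n
  proof -
    obtain g where "(f n, g) \<in> S" using f by blast
    then show ?thesis by (rule orth)
  qed
  have "(\<lambda>n. cinner h (Q (f n))) \<longlonglongrightarrow> cinner h h" by (intro tendsto_cinner h tendsto_const)
  then have "cinner h h = 0" unfolding z by (simp add: LIMSEQ_const_iff)
  then show ?thesis by (simp add: cinner_self_eq_zero)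
qed

end


lemma near_seq:
  fixes g u :: "nat \<Rightarrow> 'a::real_normed_vector"
  assumes "\<forall>n. norm (g n - u n) < inverse (real (Suc n))" "u \<longlonglongrightarrow> x"
  shows "g \<longlonglongrightarrow> x"
proof -
  have ev: "eventually (\<lambda>n. norm (g n - u n) \<le> inverse (real (Suc n))) sequentially"
    using assms(1) by (intro always_eventually) (simp add: less_imp_le)
  have "(\<lambda>n. g n - u n) \<longlonglongrightarrow> 0"
    by (rule Lim_null_comparison[OF ev LIMSEQ_inverse_real_of_nat])
  from tendsto_add[OF this assms(2)] show ?thesis by simp
qed

context thm_setup begin

definition Dc :: "'a set" where
  "Dc = {x. \<exists>f. (\<forall>n. f n \<in> Domain S) \<and> f \<longlonglongrightarrow> x \<and> convergent (\<lambda>n. Q (f n))}"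
definition Qb :: "'a \<Rightarrow> 'b" where
  "Qb x = (THE h. \<exists>f. (\<forall>n. f n \<in> Domain S) \<and> f \<longlonglongrightarrow> x \<and> (\<lambda>n. Q (f n)) \<longlonglongrightarrow> h)"

lemma lim_unique:
  assumes "\<forall>n. f n \<in> Domain S" "f \<longlonglongrightarrow> x" "(\<lambda>n. Q (f n)) \<longlonglongrightarrow> h1"
    "\<forall>n. g n \<in> Domain S" "g \<longlonglongrightarrow> x" "(\<lambda>n. Q (g n)) \<longlonglongrightarrow> h2"
  shows "h1 = h2"
proof -
  have "h1 - h2 = 0"
  proof (rule closable[of "\<lambda>n. f n - g n"])
    show "\<forall>n. f n - g n \<in> Domain S" using assms dom_diff by blast
    show "(\<lambda>n. f n - g n) \<longlonglongrightarrow> 0" using tendsto_diff[OF assms(2) assms(5)] by simp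
    have "(\<lambda>n. Q (f n) - Q (g n)) \<longlonglongrightarrow> h1 - h2" using tendsto_diff[OF assms(3) assms(6)] .
    then show "(\<lambda>n. Q (f n - g n)) \<longlonglongrightarrow> h1 - h2" using assms(1,4) Q_diff by simp
  qed
  then show ?thesis by simp
qed

lemma Qb_lim:
  assumes "\<forall>n. f n \<in> Domain S" "f \<longlonglongrightarrow> x" "(\<lambda>n. Q (f n)) \<longlonglongrightarrow> h"
  shows "x \<in> Dc" "Qb x = h"
proof -
  show "x \<in> Dc" unfolding Dc_def using assms convergentI by blast
  show "Qb x = h" unfolding Qb_def
  proof (rule the_equality)
    show "\<exists>f. (\<forall>n. f n \<in> Domain S) \<and> f \<longlonglongrightarrow> x \<and> (\<lambda>n. Q (f n)) \<longlonglongrightarrow> h" using assms by blast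
    fix h' assume "\<exists>f. (\<forall>n. f n \<in> Domain S) \<and> f \<longlonglongrightarrow> x \<and> (\<lambda>n. Q (f n)) \<longlonglongrightarrow> h'"
    then obtain g where "\<forall>n. g n \<in> Domain S" "g \<longlonglongrightarrow> x" "(\<lambda>n. Q (g n)) \<longlonglongrightarrow> h'" by blast
    then show "h' = h" using lim_unique assms by blast
  qed
qed

lemma Dc_E:
  assumes "x \<in> Dc"
  obtains f where "\<forall>n. f n \<in> Domain S" "f \<longlonglongrightarrow> x" "(\<lambda>n. Q (f n)) \<longlonglongrightarrow> Qb x"
proof -
  obtain f L where f: "\<forall>n. f n \<in> Domain S" "f \<longlonglongrightarrow> x" "(\<lambda>n. Q (f n)) \<longlonglongrightarrow> L"
    using assms unfolding Dc_def convergent_def by blast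
  then have "Qb x = L" by (rule Qb_lim)
  then show ?thesis using f that by blast
qed

lemma Dom_Dc: "x \<in> Domain S \<Longrightarrow> x \<in> Dc"
  using Qb_lim(1)[of "\<lambda>n. x" x "Q x"] by simp
lemma Qb_Dom: "x \<in> Domain S \<Longrightarrow> Qb x = Q x"
  using Qb_lim(2)[of "\<lambda>n. x" x "Q x"] by simp

lemma Dc_add: assumes "x \<in> Dc" "y \<in> Dc" shows "x + y \<in> Dc" "Qb (x + y) = Qb x + Qb y"
proof -
  obtain f where f: "\<forall>n. f n \<in> Domain S" "f \<longlonglongrightarrow> x" "(\<lambda>n. Q (f n)) \<longlonglongrightarrow> Qb x" using assms(1) Dc_E by blast
  obtain g where g: "\<forall>n. g n \<in> Domain S" "g \<longlonglongrightarrow> y" "(\<lambda>n. Q (g n)) \<longlonglongrightarrow> Qb y" using assms(2) Dc_E by blast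
  have a: "\<forall>n. f n + g n \<in> Domain S" using f g dom_add by blast
  have b: "(\<lambda>n. f n + g n) \<longlonglongrightarrow> x + y" using f g by (intro tendsto_add) auto
  have "(\<lambda>n. Q (f n) + Q (g n)) \<longlonglongrightarrow> Qb x + Qb y" using f g by (intro tendsto_add) auto
  then have c: "(\<lambda>n. Q (f n + g n)) \<longlonglongrightarrow> Qb x + Qb y" using f g Q_add by simp
  show "x + y \<in> Dc" "Qb (x + y) = Qb x + Qb y" using Qb_lim[OF a b c] by auto
qed

lemma Dc_scale: assumes "x \<in> Dc" shows "a *\<^sub>C x \<in> Dc" "Qb (a *\<^sub>C x) = a *\<^sub>C Qb x"
proof -
  obtain f where f: "\<forall>n. f n \<in> Domain S" "f \<longlonglongrightarrow> x" "(\<lambda>n. Q (f n)) \<longlonglongrightarrow> Qb x" using assms(1) Dc_E by blast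
  have a: "\<forall>n. a *\<^sub>C f n \<in> Domain S" using f dom_scale by blast
  have b: "(\<lambda>n. a *\<^sub>C f n) \<longlonglongrightarrow> a *\<^sub>C x" using f by (intro tendsto_scaleC) auto
  have "(\<lambda>n. a *\<^sub>C Q (f n)) \<longlonglongrightarrow> a *\<^sub>C Qb x" using f by (intro tendsto_scaleC) auto
  then have c: "(\<lambda>n. Q (a *\<^sub>C f n)) \<longlonglongrightarrow> a *\<^sub>C Qb x" using f Q_scale by simp
  show "a *\<^sub>C x \<in> Dc" "Qb (a *\<^sub>C x) = a *\<^sub>C Qb x" using Qb_lim[OF a b c] by auto
qed

lemma Dc_diff: assumes "x \<in> Dc" "y \<in> Dc" shows "x - y \<in> Dc" "Qb (x - y) = Qb x - Qb y"
proof -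
  have "(-1) *\<^sub>C y \<in> Dc" "Qb ((-1) *\<^sub>C y) = (-1) *\<^sub>C Qb y" using Dc_scale[OF assms(2)] by auto
  then show "x - y \<in> Dc" "Qb (x - y) = Qb x - Qb y" using Dc_add[OF assms(1), of "(-1) *\<^sub>C y"]
    by (simp_all add: scaleC_minus1)
qed

lemma Dc_approx:
  assumes "x \<in> Dc" "e > 0"
  shows "\<exists>g \<in> Domain S. norm (g - x) < e \<and> norm (Q g - Qb x) < e"
proof -
  obtain f where f: "\<forall>n. f n \<in> Domain S" "f \<longlonglongrightarrow> x" "(\<lambda>n. Q (f n)) \<longlonglongrightarrow> Qb x" using assms(1) Dc_E by blast
  obtain N1 where N1: "\<forall>n\<ge>N1. norm (f n - x) < e" using f(2) assms(2) unfolding LIMSEQ_iff by blast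
  obtain N2 where N2: "\<forall>n\<ge>N2. norm (Q (f n) - Qb x) < e" using f(3) assms(2) unfolding LIMSEQ_iff by blast
  show ?thesis using f(1) N1[rule_format, of "max N1 N2"] N2[rule_format, of "max N1 N2"] by auto
qed

definition tb :: "'a form" where
  "tb = (Dc, \<lambda>x y. if x \<in> Dc \<and> y \<in> Dc then of_real c * cinner x y + cinner (Qb x) (Qb y) else 0)"

lemma tb_fst: "fst tb = Dc" by (simp add: tb_def)
lemma tb_val: "x \<in> Dc \<Longrightarrow> y \<in> Dc \<Longrightarrow> snd tb x y = of_real c * cinner x y + cinner (Qb x) (Qb y)"
  by (simp add: tb_def)
lemma tb_out: "x \<notin> Dc \<or> y \<notin> Dc \<Longrightarrow> snd tb x y = 0"
  by (auto simp add: tb_def)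
lemma tb_self: "x \<in> Dc \<Longrightarrow> snd tb x x = of_real (c * (norm x)\<^sup>2 + (norm (Qb x))\<^sup>2)"
  by (simp add: tb_val cinner_self)

lemma tb_is_form: "is_form tb"
  unfolding is_form_def tb_fst
proof (intro conjI allI impI)
  show "0 \<in> Dc" using Dom_Dc dom0 by blast
  show "x + y \<in> Dc" if "x \<in> Dc" "y \<in> Dc" for x y using that Dc_add by blast
  show "a *\<^sub>C x \<in> Dc" if "x \<in> Dc" for a x using that Dc_scale by blast
  fix x y z assume xyz: "x \<in> Dc" "y \<in> Dc" "z \<in> Dc"
  show "snd tb (x + y) z = snd tb x z + snd tb y z"
    using xyz Dc_add[of x y] by (simp add: tb_val cinner_add_left algebra_simps)
  show "snd tb z (x + y) = snd tb z x + snd tb z y"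
    using xyz Dc_add[of x y] by (simp add: tb_val cinner_add_right algebra_simps)
next
  fix a x y assume xy: "x \<in> Dc" "y \<in> Dc"
  show "snd tb (a *\<^sub>C x) y = a * snd tb x y"
    using xy Dc_scale[of x a] by (simp add: tb_val cinner_scaleC_left algebra_simps)
  show "snd tb x (a *\<^sub>C y) = cnj a * snd tb x y"
    using xy Dc_scale[of y a] by (simp add: tb_val cinner_scaleC_right algebra_simps)
next
  fix x y assume "x \<notin> Dc \<or> y \<notin> Dc"
  then show "snd tb x y = 0" by (rule tb_out)
qed

lemma tb_herm: "snd tb x y = cnj (snd tb y x)"
proof (cases "x \<in> Dc \<and> y \<in> Dc")
  case True
  then show ?thesis using cinner_commute[of x y] cinner_commute[of "Qb x" "Qb y"] by (simp add: tb_val)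
qed (auto simp: tb_out)

end


context thm_setup begin

lemma tb_closed_seq:
  assumes u: "\<forall>n. u n \<in> Dc" and ux: "u \<longlonglongrightarrow> x"
    and T: "((\<lambda>(n, m). snd tb (u n - u m) (u n - u m)) \<longlongrightarrow> 0) (sequentially \<times>\<^sub>F sequentially)"
  shows "x \<in> Dc \<and> (\<lambda>n. snd tb (u n - x) (u n - x)) \<longlonglongrightarrow> 0"
proof -
  have eq: "snd tb (u n - u m) (u n - u m) = of_real (c * (norm (u n - u m))\<^sup>2 + (norm (Qb (u n) - Qb (u m)))\<^sup>2)" for n m
    using u Dc_diff[of "u n" "u m"] tb_self by simp
  have A: "((\<lambda>(n, m). (norm (u n - u m))\<^sup>2) \<longlongrightarrow> 0) (sequentially \<times>\<^sub>F sequentially)"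
    using Cauchy_prod_iff LIMSEQ_imp_Cauchy[OF ux] by blast
  have "((\<lambda>p. Re ((\<lambda>(n, m). snd tb (u n - u m) (u n - u m)) p)) \<longlongrightarrow> Re 0) (sequentially \<times>\<^sub>F sequentially)"
    by (rule tendsto_Re[OF T])
  moreover have "(\<lambda>p. Re ((\<lambda>(n, m). snd tb (u n - u m) (u n - u m)) p)) =
      (\<lambda>p. (\<lambda>(n, m). c * (norm (u n - u m))\<^sup>2) p + (\<lambda>(n,m). (norm (Qb (u n) - Qb (u m)))\<^sup>2) p)"
    by (simp add: eq split_def)
  ultimately have T': "((\<lambda>p. (\<lambda>(n, m). c * (norm (u n - u m))\<^sup>2) p + (\<lambda>(n,m). (norm (Qb (u n) - Qb (u m)))\<^sup>2) p) \<longlongrightarrow> 0)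
      (sequentially \<times>\<^sub>F sequentially)" by simp
  have A': "((\<lambda>p. (\<lambda>(n, m). c * (norm (u n - u m))\<^sup>2) p) \<longlongrightarrow> 0) (sequentially \<times>\<^sub>F sequentially)"
    using tendsto_mult[OF tendsto_const[of c] A] by (simp add: split_def)
  have B: "((\<lambda>(n,m). (norm (Qb (u n) - Qb (u m)))\<^sup>2) \<longlongrightarrow> 0) (sequentially \<times>\<^sub>F sequentially)"
    using tendsto_diff[OF T' A'] by simp
  have "Cauchy (\<lambda>n. Qb (u n))" using B Cauchy_prod_iff by blast
  then obtain h where h: "(\<lambda>n. Qb (u n)) \<longlonglongrightarrow> h" using Cauchy_convergent_iff convergent_def by blast
  have "\<forall>n. \<exists>g. g \<in> Domain S \<and> norm (g - u n) < inverse (real (Suc n)) \<and> norm (Q g - Qb (u n)) < inverse (real (Suc n))"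
  proof
    fix n
    have "inverse (real (Suc n)) > 0" by simp
    from Dc_approx[OF u[rule_format, of n] this] show "\<exists>g. g \<in> Domain S \<and> norm (g - u n) < inverse (real (Suc n)) \<and> norm (Q g - Qb (u n)) < inverse (real (Suc n))"
      by blast
  qed
  then obtain g where g: "\<forall>n. g n \<in> Domain S \<and> norm (g n - u n) < inverse (real (Suc n)) \<and> norm (Q (g n) - Qb (u n)) < inverse (real (Suc n))"
    by metis
  have gx: "g \<longlonglongrightarrow> x" using near_seq[OF _ ux] g by blast
  have gh: "(\<lambda>n. Q (g n)) \<longlonglongrightarrow> h" using near_seq[OF _ h, of "\<lambda>n. Q (g n)"] g by blast
  have xD: "x \<in> Dc" and Qx: "Qb x = h" using Qb_lim[OF _ gx gh] g by blast+
  have eq2: "snd tb (u n - x) (u n - x) = of_real (c * (norm (u n - x))\<^sup>2 + (norm (Qb (u n) - h))\<^sup>2)" for n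
    using u Dc_diff[OF _ xD, of "u n"] tb_self Qx by simp
  have l1: "(\<lambda>n. u n - x) \<longlonglongrightarrow> 0" using LIM_zero[OF ux] .
  have l2: "(\<lambda>n. Qb (u n) - h) \<longlonglongrightarrow> 0" using LIM_zero[OF h] .
  have "(\<lambda>n. of_real (c * (norm (u n - x))\<^sup>2 + (norm (Qb (u n) - h))\<^sup>2) :: complex) \<longlonglongrightarrow> of_real (c * (norm (0::'a))\<^sup>2 + (norm (0::'b))\<^sup>2)"
    by (intro tendsto_intros l1 l2)
  then show ?thesis using xD unfolding eq2 by simp
qed

lemma tb_closed: "closed_form tb"
  unfolding closed_form_def
proof (intro conjI allI impI)
  show "is_form tb" by (rule tb_is_form)
  show "snd tb x y = cnj (snd tb y x)" for x y by (rule tb_herm)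
  show "\<exists>c. \<forall>x\<in>fst tb. c * (norm x)\<^sup>2 \<le> Re (snd tb x x)"
    by (rule exI[of _ c]) (simp add: tb_fst tb_self)
  fix u x assume "\<forall>n. u n \<in> fst tb" "u \<longlonglongrightarrow> x"
    "((\<lambda>(n, m). snd tb (u n - u m) (u n - u m)) \<longlongrightarrow> 0) (sequentially \<times>\<^sub>F sequentially)"
  then have "x \<in> Dc \<and> (\<lambda>n. snd tb (u n - x) (u n - x)) \<longlonglongrightarrow> 0"
    using tb_closed_seq unfolding tb_fst by blast
  then show "x \<in> fst tb" "(\<lambda>n. snd tb (u n - x) (u n - x)) \<longlonglongrightarrow> 0" by (auto simp: tb_fst)
qed

lemma fst_form_of_rel: "fst (form_of_rel S) = Domain S"
  by (simp add: form_of_rel_def)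

lemma tb_ext: "form_extends (form_of_rel S) tb"
  unfolding form_extends_def fst_form_of_rel tb_fst
  using Dom_Dc by (auto simp: tb_val Qb_Dom rep_val)

end


context thm_setup begin

lemma tb_min_diag:
  assumes cl: "closed_form t2" and ex: "form_extends (form_of_rel S) t2" and x: "x \<in> Dc"
  shows "x \<in> fst t2 \<and> snd t2 x x = snd tb x x"
proof -
  have f2: "is_form t2" and h2: "\<forall>x y. snd t2 x y = cnj (snd t2 y x)"
    and cl2: "\<And>u x. (\<forall>n. u n \<in> fst t2) \<Longrightarrow> u \<longlonglongrightarrow> x \<Longrightarrow>
        ((\<lambda>(n, m). snd t2 (u n - u m) (u n - u m)) \<longlongrightarrow> 0) (sequentially \<times>\<^sub>F sequentially) \<Longrightarrow>
        x \<in> fst t2 \<and> (\<lambda>n. snd t2 (u n - x) (u n - x)) \<longlonglongrightarrow> 0"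
    using cl unfolding closed_form_def by blast+
  obtain c2 where c2: "\<forall>z\<in>fst t2. c2 * (norm z)\<^sup>2 \<le> Re (snd t2 z z)"
    using cl unfolding closed_form_def by blast
  have sub: "Domain S \<subseteq> fst t2" and agree: "\<And>x y. x \<in> Domain S \<Longrightarrow> y \<in> Domain S \<Longrightarrow> snd t2 x y = snd (form_of_rel S) x y"
    using ex unfolding form_extends_def fst_form_of_rel by blast+
  obtain f where f: "\<forall>n. f n \<in> Domain S" "f \<longlonglongrightarrow> x" "(\<lambda>n. Q (f n)) \<longlonglongrightarrow> Qb x" using x Dc_E by blast
  have e: "snd t2 (f n - f m) (f n - f m) = of_real (c * (norm (f n - f m))\<^sup>2 + (norm (Q (f n) - Q (f m)))\<^sup>2)" for n m
  proof -
    have d: "f n - f m \<in> Domain S" using f(1) dom_diff by blast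
    show ?thesis using agree[OF d d] rep_val[OF d d] Q_diff f(1) by (simp add: cinner_self)
  qed
  have A: "((\<lambda>(n, m). (norm (f n - f m))\<^sup>2) \<longlongrightarrow> 0) (sequentially \<times>\<^sub>F sequentially)"
    using Cauchy_prod_iff LIMSEQ_imp_Cauchy[OF f(2)] by blast
  have B: "((\<lambda>(n, m). (norm (Q (f n) - Q (f m)))\<^sup>2) \<longlongrightarrow> 0) (sequentially \<times>\<^sub>F sequentially)"
    using Cauchy_prod_iff[of "\<lambda>n. Q (f n)"] LIMSEQ_imp_Cauchy[OF f(3)] by blast
  have "((\<lambda>p. complex_of_real (c * (\<lambda>(n, m). (norm (f n - f m))\<^sup>2) p + (\<lambda>(n, m). (norm (Q (f n) - Q (f m)))\<^sup>2) p))
      \<longlongrightarrow> complex_of_real (c * 0 + 0)) (sequentially \<times>\<^sub>F sequentially)"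
    by (intro tendsto_intros A B)
  then have T: "((\<lambda>(n, m). snd t2 (f n - f m) (f n - f m)) \<longlongrightarrow> 0) (sequentially \<times>\<^sub>F sequentially)"
    by (simp add: e split_def)
  have fin: "\<forall>n. f n \<in> fst t2" using f(1) sub by blast
  from cl2[OF fin f(2) T] have xt: "x \<in> fst t2" and dd: "(\<lambda>n. snd t2 (f n - x) (f n - x)) \<longlonglongrightarrow> 0" by auto
  define d where "d n = f n - x" for n
  have dt: "d n \<in> fst t2" for n unfolding d_def using form_diff[OF f2] fin xt by blast
  have d0: "d \<longlonglongrightarrow> 0" unfolding d_def using LIM_zero[OF f(2)] .
  have fn: "f n = x + 1 *\<^sub>C d n" for n by (simp add: d_def scaleC_one)
  have exp: "Re (snd t2 (f n) (f n)) = Re (snd t2 x x) + 2 * Re (snd t2 (d n) x) + Re (snd t2 (d n) (d n))" for n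
    unfolding fn form_expand[OF f2 xt dt] using h2[rule_format, of x "d n"] by simp
  have R1: "(\<lambda>n. Re (snd t2 (d n) (d n))) \<longlonglongrightarrow> 0"
    using tendsto_Re[OF dd] unfolding d_def by simp
  have cs: "(Re (snd t2 (d n) x) - c2 * Re (cinner (d n) x))\<^sup>2 \<le>
     (Re (snd t2 x x) - c2 * (norm x)\<^sup>2) * (Re (snd t2 (d n) (d n)) - c2 * (norm (d n))\<^sup>2)" for n
    by (rule form_cs[OF f2 h2 c2 dt xt])
  have "(\<lambda>n. (Re (snd t2 x x) - c2 * (norm x)\<^sup>2) * (Re (snd t2 (d n) (d n)) - c2 * (norm (d n))\<^sup>2))
     \<longlonglongrightarrow> (Re (snd t2 x x) - c2 * (norm x)\<^sup>2) * (0 - c2 * (norm (0::'a))\<^sup>2)"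
    by (intro tendsto_intros R1 d0)
  then have rhs: "(\<lambda>n. (Re (snd t2 x x) - c2 * (norm x)\<^sup>2) * (Re (snd t2 (d n) (d n)) - c2 * (norm (d n))\<^sup>2)) \<longlonglongrightarrow> 0"
    by simp
  have sq: "(\<lambda>n. (Re (snd t2 (d n) x) - c2 * Re (cinner (d n) x))\<^sup>2) \<longlonglongrightarrow> 0"
    by (rule tendsto_sandwich[OF _ _ tendsto_const rhs]) (auto intro: always_eventually cs)
  have "(\<lambda>n. sqrt ((Re (snd t2 (d n) x) - c2 * Re (cinner (d n) x))\<^sup>2)) \<longlonglongrightarrow> sqrt 0"
    by (rule tendsto_real_sqrt[OF sq])
  then have "(\<lambda>n. \<bar>Re (snd t2 (d n) x) - c2 * Re (cinner (d n) x)\<bar>) \<longlonglongrightarrow> 0" by simp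
  then have s1: "(\<lambda>n. Re (snd t2 (d n) x) - c2 * Re (cinner (d n) x)) \<longlonglongrightarrow> 0"
    by (simp add: tendsto_rabs_zero_iff)
  have s2: "(\<lambda>n. c2 * Re (cinner (d n) x)) \<longlonglongrightarrow> c2 * Re (cinner 0 x)"
    by (intro tendsto_intros tendsto_cinner d0)
  have R2: "(\<lambda>n. Re (snd t2 (d n) x)) \<longlonglongrightarrow> 0"
    using tendsto_add[OF s1 s2] by simp
  have lim1: "(\<lambda>n. Re (snd t2 (f n) (f n))) \<longlonglongrightarrow> Re (snd t2 x x) + 2 * 0 + 0"
    unfolding exp by (intro tendsto_intros R1 R2)
  have vf: "Re (snd t2 (f n) (f n)) = c * (norm (f n))\<^sup>2 + (norm (Q (f n)))\<^sup>2" for n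
    using agree[of "f n" "f n"] rep_val[of "f n" "f n"] f(1) by (simp add: cinner_self)
  have lim2: "(\<lambda>n. Re (snd t2 (f n) (f n))) \<longlonglongrightarrow> c * (norm x)\<^sup>2 + (norm (Qb x))\<^sup>2"
    unfolding vf by (intro tendsto_intros f(2) f(3))
  have re: "Re (snd t2 x x) = c * (norm x)\<^sup>2 + (norm (Qb x))\<^sup>2"
    using LIMSEQ_unique[OF lim1 lim2] by simp
  have "Im (snd t2 x x) = Im (cnj (snd t2 x x))" using h2[rule_format, of x x] by simp
  then have im: "Im (snd t2 x x) = 0" by simp
  have "snd t2 x x = of_real (c * (norm x)\<^sup>2 + (norm (Qb x))\<^sup>2)"
    by (rule complex_eqI) (simp_all add: re im)
  then show ?thesis using xt tb_self[OF x] by simp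
qed

lemma tb_min:
  assumes cl: "closed_form t2" and ex: "form_extends (form_of_rel S) t2"
  shows "form_extends tb t2"
  unfolding form_extends_def tb_fst
proof (intro conjI allI impI subsetI)
  have f2: "is_form t2" using cl unfolding closed_form_def by blast
  fix x assume "x \<in> Dc" then show "x \<in> fst t2" using tb_min_diag[OF cl ex] by blast
next
  have f2: "is_form t2" using cl unfolding closed_form_def by blast
  fix x y assume x: "x \<in> Dc" and y: "y \<in> Dc"
  have xt: "x \<in> fst t2" and yt: "y \<in> fst t2" using tb_min_diag[OF cl ex] x y by blast+
  have dg: "snd t2 (x + a *\<^sub>C y) (x + a *\<^sub>C y) = snd tb (x + a *\<^sub>C y) (x + a *\<^sub>C y)" for a
  proof -
    have "x + a *\<^sub>C y \<in> Dc" using Dc_add[OF x Dc_scale(1)[OF y]] by blast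
    then show ?thesis using tb_min_diag[OF cl ex] by blast
  qed
  have "4 * snd t2 x y = 4 * snd tb x y"
    unfolding form_polar[OF f2 xt yt] form_polar[OF tb_is_form, of x y, unfolded tb_fst, OF x y] dg ..
  then show "snd t2 x y = snd tb x y" by simp
qed

lemma closure_eq: "form_closure (form_of_rel S) = tb"
  unfolding form_closure_def
proof (rule the_equality)
  show "closed_form tb \<and> form_extends (form_of_rel S) tb \<and>
    (\<forall>t''. closed_form t'' \<and> form_extends (form_of_rel S) t'' \<longrightarrow> form_extends tb t'')"
    using tb_closed tb_ext tb_min by blast
  fix t' assume H: "closed_form t' \<and> form_extends (form_of_rel S) t' \<and>
    (\<forall>t''. closed_form t'' \<and> form_extends (form_of_rel S) t'' \<longrightarrow> form_extends t' t'')"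
  have e1: "form_extends t' tb" using H tb_closed tb_ext by blast
  have e2: "form_extends tb t'" using H tb_min by blast
  have ft: "fst t' = Dc" using e1 e2 unfolding form_extends_def tb_fst by blast
  have f1: "is_form t'" using H unfolding closed_form_def by blast
  have "snd t' = snd tb"
  proof (intro ext)
    fix x y
    show "snd t' x y = snd tb x y"
    proof (cases "x \<in> Dc \<and> y \<in> Dc")
      case True then show ?thesis using e2 unfolding form_extends_def tb_fst by blast
    next
      case False then show ?thesis using form_out[OF f1, of x y] tb_out[of x y] ft by auto
    qed
  qed
  then show "t' = tb" using ft tb_fst by (simp add: prod_eq_iff)
qed

end


context thm_setup begin

lemma riesz:
  assumes bnd: "\<forall>\<psi>\<in>Domain S. (cmod (cinner \<psi> \<phi>))\<^sup>2 \<le> C * (norm (Q \<psi>))\<^sup>2"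
  shows "\<exists>h. \<forall>g\<in>Domain S. cinner \<phi> g = cinner h (Q g)"
proof -
  define K where "K = sqrt (max C 0)"
  have K0: "K \<ge> 0" unfolding K_def by simp
  have bK: "Re (cinner \<psi> \<phi>) \<le> K * norm (Q \<psi>)" if "\<psi> \<in> Domain S" for \<psi>
  proof -
    have "(cmod (cinner \<psi> \<phi>))\<^sup>2 \<le> (K * norm (Q \<psi>))\<^sup>2"
    proof -
      have "(cmod (cinner \<psi> \<phi>))\<^sup>2 \<le> C * (norm (Q \<psi>))\<^sup>2" using bnd that by blast
      also have "\<dots> \<le> max C 0 * (norm (Q \<psi>))\<^sup>2" by (intro mult_right_mono) auto
      also have "\<dots> = (K * norm (Q \<psi>))\<^sup>2" unfolding K_def by (simp add: power_mult_distrib)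
      finally show ?thesis .
    qed
    then have "cmod (cinner \<psi> \<phi>) \<le> K * norm (Q \<psi>)" by (rule power2_le_imp_le) (simp add: K0)
    then show ?thesis using complex_Re_le_cmod order_trans by blast
  qed
  define E where "E \<psi> = (norm (Q \<psi>))\<^sup>2 - 2 * Re (cinner \<psi> \<phi>)" for \<psi>
  have Elb: "- K\<^sup>2 \<le> E \<psi>" if "\<psi> \<in> Domain S" for \<psi>
  proof -
    have "0 \<le> (norm (Q \<psi>) - K)\<^sup>2" by simp
    then show ?thesis using bK[OF that] unfolding E_def by (simp add: power2_eq_square algebra_simps)
  qed
  define m where "m = Inf (E ` Domain S)"
  have ne: "E ` Domain S \<noteq> {}" using dom0 by blast
  have bb: "bdd_below (E ` Domain S)" by (rule bdd_belowI[of _ "- K\<^sup>2"]) (use Elb in auto)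
  have mle: "m \<le> E \<psi>" if "\<psi> \<in> Domain S" for \<psi>
    unfolding m_def using that bb by (auto intro: cInf_lower)
  have "\<forall>n. \<exists>\<psi>. \<psi> \<in> Domain S \<and> E \<psi> < m + inverse (real (Suc n))"
  proof
    fix n
    have "Inf (E ` Domain S) < m + inverse (real (Suc n))" unfolding m_def by simp
    from cInf_lessD[OF ne this] show "\<exists>\<psi>. \<psi> \<in> Domain S \<and> E \<psi> < m + inverse (real (Suc n))" by blast
  qed
  then obtain f where f: "\<forall>n. f n \<in> Domain S \<and> E (f n) < m + inverse (real (Suc n))" by metis
  have fD: "f n \<in> Domain S" for n using f by blast
  have par: "(norm (Q (f n) - Q (f k)))\<^sup>2 \<le> 2 * inverse (real (Suc n)) + 2 * inverse (real (Suc k))" for n k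
  proof -
    define a where "a = Q (f n)"
    define b where "b = Q (f k)"
    define mid where "mid = (1/2::real) *\<^sub>R (f n + f k)"
    have midD: "mid \<in> Domain S" unfolding mid_def scaleR_scaleC by (intro dom_scale dom_add fD)
    have Qmid: "Q mid = (1/2::real) *\<^sub>R (a + b)"
      unfolding mid_def a_def b_def scaleR_scaleC using Q_scale Q_add dom_add fD by simp
    have Emid: "E mid = (1/4) * (norm (a + b))\<^sup>2 - Re (cinner (f n) \<phi>) - Re (cinner (f k) \<phi>)"
    proof -
      have n1: "(norm ((1/2::real) *\<^sub>R (a+b)))\<^sup>2 = (1/4) * (norm (a+b))\<^sup>2" by (simp add: power2_eq_square)
      have c1: "2 * Re (cinner mid \<phi>) = Re (cinner (f n) \<phi>) + Re (cinner (f k) \<phi>)"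
        by (simp add: mid_def cinner_scaleR_left cinner_add_left)
      have "E mid = (1/4) * (norm (a+b))\<^sup>2 - 2 * Re (cinner mid \<phi>)" unfolding E_def Qmid n1 ..
      then show ?thesis using c1 by linarith
    qed
    have p: "(norm (a + b))\<^sup>2 + (norm (a - b))\<^sup>2 = 2 * (norm a)\<^sup>2 + 2 * (norm b)\<^sup>2"
      by (rule parallelogram)
    have ea: "E (f n) = (norm a)\<^sup>2 - 2 * Re (cinner (f n) \<phi>)" unfolding E_def a_def ..
    have eb: "E (f k) = (norm b)\<^sup>2 - 2 * Re (cinner (f k) \<phi>)" unfolding E_def b_def ..
    have "(norm (a - b))\<^sup>2 = 2 * E (f n) + 2 * E (f k) - 4 * E mid"
      using p ea eb Emid by linarith
    also have "\<dots> \<le> 2 * (m + inverse (real (Suc n))) + 2 * (m + inverse (real (Suc k))) - 4 * m"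
      using f mle[OF midD] by (intro diff_mono add_mono mult_left_mono) (auto intro: less_imp_le)
    finally show ?thesis unfolding a_def b_def by simp
  qed
  have "Cauchy (\<lambda>n. Q (f n))"
  proof (rule CauchyI)
    fix e :: real assume "e > 0"
    then have "e\<^sup>2 / 4 > 0" by simp
    then obtain N where N: "inverse (real (Suc N)) < e\<^sup>2 / 4" using reals_Archimedean by blast
    show "\<exists>M. \<forall>m\<ge>M. \<forall>n\<ge>M. norm (Q (f m) - Q (f n)) < e"
    proof (intro exI allI impI)
      fix p q assume "N \<le> p" "N \<le> q"
      then have "inverse (real (Suc p)) \<le> inverse (real (Suc N))" "inverse (real (Suc q)) \<le> inverse (real (Suc N))"
        by (auto intro!: le_imp_inverse_le)
      then have "(norm (Q (f p) - Q (f q)))\<^sup>2 < e\<^sup>2" using par[of p q] N by linarith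
      then show "norm (Q (f p) - Q (f q)) < e" using \<open>e > 0\<close> by (simp add: power_less_imp_less_base)
    qed
  qed
  then obtain h where h: "(\<lambda>n. Q (f n)) \<longlonglongrightarrow> h" using Cauchy_convergent_iff convergent_def by blast
  have Em: "(\<lambda>n. E (f n)) \<longlonglongrightarrow> m"
  proof (rule tendsto_sandwich[OF _ _ tendsto_const])
    show "eventually (\<lambda>n. m \<le> E (f n)) sequentially" using mle fD by (auto intro: always_eventually)
    show "eventually (\<lambda>n. E (f n) \<le> m + inverse (real (Suc n))) sequentially" using f
      by (auto intro: always_eventually less_imp_le)
    show "(\<lambda>n. m + inverse (real (Suc n))) \<longlonglongrightarrow> m"
      using tendsto_add[OF tendsto_const LIMSEQ_inverse_real_of_nat, of m] by simp
  qed
  have var: "Re (cinner (Q g) h) = Re (cinner g \<phi>)" if gD: "g \<in> Domain S" for g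
  proof -
    define a where "a = Re (cinner (Q g) h) - Re (cinner g \<phi>)"
    have q: "0 \<le> (norm (Q g))\<^sup>2 * t\<^sup>2 + 2 * a * t + 0" for t :: real
    proof -
      have ex: "E (f n + t *\<^sub>R g) = E (f n) + 2 * t * (Re (cinner (Q g) (Q (f n))) - Re (cinner g \<phi>)) + t\<^sup>2 * (norm (Q g))\<^sup>2" for n
      proof -
        have "Q (f n + t *\<^sub>R g) = Q (f n) + t *\<^sub>R Q g"
          unfolding scaleR_scaleC using Q_add Q_scale dom_scale fD gD by simp
        then show ?thesis unfolding E_def using norm_add_sq[of "Q (f n)" t "Q g"]
          by (simp add: cinner_add_left cinner_scaleR_left algebra_simps)
      qed
      have ge: "m \<le> E (f n + t *\<^sub>R g)" for n
        using mle dom_add[OF fD dom_scale[OF gD]] unfolding scaleR_scaleC by blast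
      have lim: "(\<lambda>n. E (f n + t *\<^sub>R g)) \<longlonglongrightarrow> m + 2 * t * (Re (cinner (Q g) h) - Re (cinner g \<phi>)) + t\<^sup>2 * (norm (Q g))\<^sup>2"
        unfolding ex by (intro tendsto_intros Em tendsto_cinner h)
      have "m \<le> m + 2 * t * (Re (cinner (Q g) h) - Re (cinner g \<phi>)) + t\<^sup>2 * (norm (Q g))\<^sup>2"
        by (rule LIMSEQ_le_const[OF lim]) (use ge in blast)
      then show ?thesis unfolding a_def by (simp add: algebra_simps)
    qed
    have "a\<^sup>2 \<le> (norm (Q g))\<^sup>2 * 0" by (rule real_quad_cs[OF q]) auto
    then show ?thesis unfolding a_def by simp
  qed
  have "cinner \<phi> g = cinner h (Q g)" if gD: "g \<in> Domain S" for g
  proof -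
    have r: "Re (cinner (Q g) h) = Re (cinner g \<phi>)" using var[OF gD] .
    have "Re (cinner (Q (\<i> *\<^sub>C g)) h) = Re (cinner (\<i> *\<^sub>C g) \<phi>)" using var[OF dom_scale[OF gD]] .
    then have i: "Im (cinner (Q g) h) = Im (cinner g \<phi>)"
      using Q_scale[OF gD, of "\<i>"] by (simp add: cinner_scaleC_left)
    have "cinner (Q g) h = cinner g \<phi>" using r i by (rule complex_eqI)
    then have "cnj (cinner (Q g) h) = cnj (cinner g \<phi>)" by simp
    then show ?thesis using cinner_commute[of h "Q g"] cinner_commute[of \<phi> g] by simp
  qed
  then show ?thesis by blast
qed

end


context thm_setup begin

lemma pair_diff_val:
  assumes "\<forall>n. (f n, f' n) \<in> S"
  shows "cinner (f' n - f' m) (f n - f m) = of_real (c * (norm (f n - f m))\<^sup>2 + (norm (Q (f n) - Q (f m)))\<^sup>2)"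
proof -
  have p: "(f n, f' n) \<in> S" "(f m, f' m) \<in> S" using assms by blast+
  have "Q (f n - f m) = Q (f n) - Q (f m)" using p by (intro Q_diff) blast+
  then show ?thesis using pair_self[OF S_diff[OF p]] by simp
qed

lemma part1: "\<phi> \<in> fst (form_closure (form_of_rel S)) \<longleftrightarrow>
   (\<exists>f f'. (\<forall>n. (f n, f' n) \<in> S) \<and> f \<longlonglongrightarrow> \<phi> \<and>
      ((\<lambda>(n, m). cinner (f' n - f' m) (f n - f m)) \<longlongrightarrow> 0) (sequentially \<times>\<^sub>F sequentially))"
  unfolding closure_eq tb_fst
proof
  assume "\<phi> \<in> Dc"
  then obtain f where f: "\<forall>n. f n \<in> Domain S" "f \<longlonglongrightarrow> \<phi>" "(\<lambda>n. Q (f n)) \<longlonglongrightarrow> Qb \<phi>" using Dc_E by blast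
  define f' where "f' n = (SOME y. (f n, y) \<in> S)" for n
  have p: "(f n, f' n) \<in> S" for n unfolding f'_def using f(1) by (metis Domain_iff someI_ex)
  have A: "((\<lambda>(n, m). (norm (f n - f m))\<^sup>2) \<longlongrightarrow> 0) (sequentially \<times>\<^sub>F sequentially)"
    using Cauchy_prod_iff LIMSEQ_imp_Cauchy[OF f(2)] by blast
  have B: "((\<lambda>(n, m). (norm (Q (f n) - Q (f m)))\<^sup>2) \<longlongrightarrow> 0) (sequentially \<times>\<^sub>F sequentially)"
    using Cauchy_prod_iff[of "\<lambda>n. Q (f n)"] LIMSEQ_imp_Cauchy[OF f(3)] by blast
  have "((\<lambda>p. complex_of_real (c * (\<lambda>(n, m). (norm (f n - f m))\<^sup>2) p + (\<lambda>(n, m). (norm (Q (f n) - Q (f m)))\<^sup>2) p))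
      \<longlongrightarrow> complex_of_real (c * 0 + 0)) (sequentially \<times>\<^sub>F sequentially)"
    by (intro tendsto_intros A B)
  then have T: "((\<lambda>(n, m). cinner (f' n - f' m) (f n - f m)) \<longlongrightarrow> 0) (sequentially \<times>\<^sub>F sequentially)"
    using p by (simp add: pair_diff_val[of f f'] split_def)
  show "\<exists>f f'. (\<forall>n. (f n, f' n) \<in> S) \<and> f \<longlonglongrightarrow> \<phi> \<and>
      ((\<lambda>(n, m). cinner (f' n - f' m) (f n - f m)) \<longlongrightarrow> 0) (sequentially \<times>\<^sub>F sequentially)"
    using p f(2) T by blast
next
  assume "\<exists>f f'. (\<forall>n. (f n, f' n) \<in> S) \<and> f \<longlonglongrightarrow> \<phi> \<and>
      ((\<lambda>(n, m). cinner (f' n - f' m) (f n - f m)) \<longlongrightarrow> 0) (sequentially \<times>\<^sub>F sequentially)"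
  then obtain f f' where p: "\<forall>n. (f n, f' n) \<in> S" and fx: "f \<longlonglongrightarrow> \<phi>"
    and T: "((\<lambda>(n, m). cinner (f' n - f' m) (f n - f m)) \<longlongrightarrow> 0) (sequentially \<times>\<^sub>F sequentially)" by blast
  have fD: "\<forall>n. f n \<in> Domain S" using p by blast
  have A: "((\<lambda>(n, m). (norm (f n - f m))\<^sup>2) \<longlongrightarrow> 0) (sequentially \<times>\<^sub>F sequentially)"
    using Cauchy_prod_iff LIMSEQ_imp_Cauchy[OF fx] by blast
  have "((\<lambda>p. Re ((\<lambda>(n, m). cinner (f' n - f' m) (f n - f m)) p)) \<longlongrightarrow> Re 0) (sequentially \<times>\<^sub>F sequentially)"
    by (rule tendsto_Re[OF T])
  moreover have "(\<lambda>p. Re ((\<lambda>(n, m). cinner (f' n - f' m) (f n - f m)) p)) =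
      (\<lambda>p. (\<lambda>(n, m). c * (norm (f n - f m))\<^sup>2) p + (\<lambda>(n,m). (norm (Q (f n) - Q (f m)))\<^sup>2) p)"
    using p by (simp add: pair_diff_val split_def)
  ultimately have T': "((\<lambda>p. (\<lambda>(n, m). c * (norm (f n - f m))\<^sup>2) p + (\<lambda>(n,m). (norm (Q (f n) - Q (f m)))\<^sup>2) p) \<longlongrightarrow> 0)
      (sequentially \<times>\<^sub>F sequentially)" by simp
  have A': "((\<lambda>p. (\<lambda>(n, m). c * (norm (f n - f m))\<^sup>2) p) \<longlongrightarrow> 0) (sequentially \<times>\<^sub>F sequentially)"
    using tendsto_mult[OF tendsto_const[of c] A] by (simp add: split_def)
  have B: "((\<lambda>(n,m). (norm (Q (f n) - Q (f m)))\<^sup>2) \<longlongrightarrow> 0) (sequentially \<times>\<^sub>F sequentially)"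
    using tendsto_diff[OF T' A'] by simp
  have "Cauchy (\<lambda>n. Q (f n))" using B Cauchy_prod_iff by blast
  then obtain h where h: "(\<lambda>n. Q (f n)) \<longlonglongrightarrow> h" using Cauchy_convergent_iff convergent_def by blast
  show "\<phi> \<in> Dc" using Qb_lim(1)[OF fD fx h] .
qed

lemma val2: "(x, x') \<in> S \<Longrightarrow> cinner (x' - c *\<^sub>R x) x = of_real ((norm (Q x))\<^sup>2)"
  using pair_self[of x x'] by (simp add: cinner_diff_left cinner_scaleR_left cinner_self)

lemma part2: "(\<phi> \<in> fst (form_closure (form_of_rel S)) \<and>
       snd (form_closure (form_of_rel S)) \<phi> \<phi> = complex_of_real (c * (norm \<phi>)\<^sup>2)) \<longleftrightarrow>
     (\<exists>f f'. (\<forall>n. (f n, f' n) \<in> S) \<and> f \<longlonglongrightarrow> \<phi> \<and>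
        (\<lambda>n. cinner (f' n - c *\<^sub>R f n) (f n)) \<longlonglongrightarrow> 0)"
proof -
  have L: "(\<phi> \<in> fst (form_closure (form_of_rel S)) \<and>
       snd (form_closure (form_of_rel S)) \<phi> \<phi> = complex_of_real (c * (norm \<phi>)\<^sup>2)) \<longleftrightarrow> (\<phi> \<in> Dc \<and> Qb \<phi> = 0)"
    unfolding closure_eq tb_fst using tb_self[of \<phi>] by auto
  show ?thesis unfolding L
  proof
    assume "\<phi> \<in> Dc \<and> Qb \<phi> = 0"
    then obtain f where f: "\<forall>n. f n \<in> Domain S" "f \<longlonglongrightarrow> \<phi>" "(\<lambda>n. Q (f n)) \<longlonglongrightarrow> 0" using Dc_E by metis
    define f' where "f' n = (SOME y. (f n, y) \<in> S)" for n
    have p: "(f n, f' n) \<in> S" for n unfolding f'_def using f(1) by (metis Domain_iff someI_ex)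
    have "(\<lambda>n. of_real ((norm (Q (f n)))\<^sup>2) :: complex) \<longlonglongrightarrow> of_real ((norm (0::'b))\<^sup>2)"
      by (intro tendsto_intros f(3))
    then have "(\<lambda>n. cinner (f' n - c *\<^sub>R f n) (f n)) \<longlonglongrightarrow> 0" by (simp add: val2[OF p])
    then show "\<exists>f f'. (\<forall>n. (f n, f' n) \<in> S) \<and> f \<longlonglongrightarrow> \<phi> \<and> (\<lambda>n. cinner (f' n - c *\<^sub>R f n) (f n)) \<longlonglongrightarrow> 0"
      using p f(2) by blast
  next
    assume "\<exists>f f'. (\<forall>n. (f n, f' n) \<in> S) \<and> f \<longlonglongrightarrow> \<phi> \<and> (\<lambda>n. cinner (f' n - c *\<^sub>R f n) (f n)) \<longlonglongrightarrow> 0"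
    then obtain f f' where p: "\<forall>n. (f n, f' n) \<in> S" and fx: "f \<longlonglongrightarrow> \<phi>"
      and T: "(\<lambda>n. cinner (f' n - c *\<^sub>R f n) (f n)) \<longlonglongrightarrow> 0" by blast
    have fD: "\<forall>n. f n \<in> Domain S" using p by blast
    have "(\<lambda>n. Re (cinner (f' n - c *\<^sub>R f n) (f n))) \<longlonglongrightarrow> Re 0" by (rule tendsto_Re[OF T])
    then have "(\<lambda>n. (norm (Q (f n)))\<^sup>2) \<longlonglongrightarrow> 0" using p by (simp add: val2)
    then have "(\<lambda>n. sqrt ((norm (Q (f n)))\<^sup>2)) \<longlonglongrightarrow> sqrt 0" by (rule tendsto_real_sqrt)
    then have "(\<lambda>n. norm (Q (f n))) \<longlonglongrightarrow> 0" by simp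
    then have q: "(\<lambda>n. Q (f n)) \<longlonglongrightarrow> 0" by (simp add: tendsto_norm_zero_iff)
    show "\<phi> \<in> Dc \<and> Qb \<phi> = 0" using Qb_lim[OF fD fx q] by blast
  qed
qed

lemma ran_iff: "\<phi> \<in> Range (adjoint_rel (op_graph Q (Domain S))) \<longleftrightarrow> (\<exists>h. \<forall>g\<in>Domain S. cinner \<phi> g = cinner h (Q g))"
  unfolding adjoint_rel_def op_graph_def by auto

lemma shift_iff: "(\<psi>, \<psi>') \<in> shift_rel S c \<longleftrightarrow> (\<exists>g. (\<psi>, g) \<in> S \<and> \<psi>' = g - c *\<^sub>R \<psi>)"
  unfolding shift_rel_def by auto

lemma part3: "\<phi> \<in> Range (adjoint_rel (op_graph Q (Domain S))) \<longleftrightarrow>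
   (\<exists>C. \<forall>\<psi> \<psi>'. (\<psi>, \<psi>') \<in> shift_rel S c \<longrightarrow> (cmod (cinner \<psi> \<phi>))\<^sup>2 \<le> C * Re (cinner \<psi>' \<psi>))"
  unfolding ran_iff
proof
  assume "\<exists>h. \<forall>g\<in>Domain S. cinner \<phi> g = cinner h (Q g)"
  then obtain h where h: "\<forall>g\<in>Domain S. cinner \<phi> g = cinner h (Q g)" by blast
  show "\<exists>C. \<forall>\<psi> \<psi>'. (\<psi>, \<psi>') \<in> shift_rel S c \<longrightarrow> (cmod (cinner \<psi> \<phi>))\<^sup>2 \<le> C * Re (cinner \<psi>' \<psi>)"
  proof (intro exI allI impI)
    fix \<psi> \<psi>' assume "(\<psi>, \<psi>') \<in> shift_rel S c"
    then obtain g where g: "(\<psi>, g) \<in> S" and e: "\<psi>' = g - c *\<^sub>R \<psi>" unfolding shift_iff by blast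
    have d: "\<psi> \<in> Domain S" using g by blast
    have "cmod (cinner \<psi> \<phi>) = cmod (cinner \<phi> \<psi>)" using cinner_commute[of \<psi> \<phi>] by simp
    also have "\<dots> = cmod (cinner h (Q \<psi>))" using h d by simp
    also have "\<dots> \<le> norm h * norm (Q \<psi>)" by (rule cinner_cs)
    finally have "(cmod (cinner \<psi> \<phi>))\<^sup>2 \<le> (norm h * norm (Q \<psi>))\<^sup>2" by (intro power_mono) auto
    also have "\<dots> = (norm h)\<^sup>2 * Re (cinner \<psi>' \<psi>)" unfolding e val2[OF g] by (simp add: power_mult_distrib)
    finally show "(cmod (cinner \<psi> \<phi>))\<^sup>2 \<le> (norm h)\<^sup>2 * Re (cinner \<psi>' \<psi>)" .
  qed
next
  assume "\<exists>C. \<forall>\<psi> \<psi>'. (\<psi>, \<psi>') \<in> shift_rel S c \<longrightarrow> (cmod (cinner \<psi> \<phi>))\<^sup>2 \<le> C * Re (cinner \<psi>' \<psi>)"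
  then obtain C where C: "\<forall>\<psi> \<psi>'. (\<psi>, \<psi>') \<in> shift_rel S c \<longrightarrow> (cmod (cinner \<psi> \<phi>))\<^sup>2 \<le> C * Re (cinner \<psi>' \<psi>)" by blast
  have "\<forall>\<psi>\<in>Domain S. (cmod (cinner \<psi> \<phi>))\<^sup>2 \<le> C * (norm (Q \<psi>))\<^sup>2"
  proof
    fix \<psi> assume "\<psi> \<in> Domain S"
    then obtain g where g: "(\<psi>, g) \<in> S" by blast
    then have "(\<psi>, g - c *\<^sub>R \<psi>) \<in> shift_rel S c" unfolding shift_iff by blast
    then show "(cmod (cinner \<psi> \<phi>))\<^sup>2 \<le> C * (norm (Q \<psi>))\<^sup>2" using C val2[OF g] by force
  qed
  then show "\<exists>h. \<forall>g\<in>Domain S. cinner \<phi> g = cinner h (Q g)" by (rule riesz)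
qed

end

theorem theorem2p5:
  fixes S :: "('a::{complex_inner, complete_space} \<times> 'a) set"
    and Q :: "'a \<Rightarrow> 'b::{complex_inner, complete_space}"
    and \<gamma> c :: real
  assumes "linear_rel S"
    and "semibounded_with_lb S \<gamma>"
    and "c \<le> \<gamma>"
    and "representing_map S c Q"
  shows "(\<forall>\<phi>. \<phi> \<in> fst (form_closure (form_of_rel S)) \<longleftrightarrow>
           (\<exists>f f'. (\<forall>n. (f n, f' n) \<in> S) \<and> f \<longlonglongrightarrow> \<phi> \<and>
              ((\<lambda>(n, m). cinner (f' n - f' m) (f n - f m)) \<longlongrightarrow> 0)
                (sequentially \<times>\<^sub>F sequentially))) \<and>
        (\<forall>\<phi>. (\<phi> \<in> fst (form_closure (form_of_rel S)) \<and>
             snd (form_closure (form_of_rel S)) \<phi> \<phi> = complex_of_real (c * (norm \<phi>)\<^sup>2)) \<longleftrightarrow>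
           (\<exists>f f'. (\<forall>n. (f n, f' n) \<in> S) \<and> f \<longlonglongrightarrow> \<phi> \<and>
              (\<lambda>n. cinner (f' n - c *\<^sub>R f n) (f n)) \<longlonglongrightarrow> 0)) \<and>
        (\<forall>\<phi>. \<phi> \<in> Range (adjoint_rel (op_graph Q (Domain S))) \<longleftrightarrow>
           (\<exists>C. \<forall>\<psi> \<psi>'. (\<psi>, \<psi>') \<in> shift_rel S c \<longrightarrow>
              (cmod (cinner \<psi> \<phi>))\<^sup>2 \<le> C * Re (cinner \<psi>' \<psi>)))"
proof -
  interpret thm_setup S Q \<gamma> c using assms by unfold_locales
  show ?thesis using part1 part2 part3 by blast
qed


end
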